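(* Let $G$ be a graph such that (i) $G[N[v]]$ is a unit interval graph for every $v\in V(G)$, and (ii) $G$ has no induced subgraph isomorphic to $C_4\cup K_1$. Let $X$ be the set of vertices $w_1\in V(G)$ for which there exist $w_2,\dots,w_6\in V(G)$ with $G[\{w_1,\dots,w_6\}]\cong\overline{C_6}$. Then $G[X]$ is co-bipartite.
   Context: A unit interval graph is an intersection graph of unit-length intervals on the real line. $C_n$ is the cycle of length $n$, $K_1$ a single vertex, $\cup$ denotes disjoint union, $\overline{H}$ the complement ($\overline{C_6}$ is the triangular prism). A graph is co-bipartite if its complement is bipartite. $N[v]$ is the closed neighborhood. *)

theory Defs
  imports Complex_Main
begin

definition graph :: "'a set \<Rightarrow> ('a \<Rightarrow> 'a \<Rightarrow> bool) \<Rightarrow> bool" where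
  "graph V E \<longleftrightarrow> finite V \<and> (\<forall>u v. E u v \<longrightarrow> u \<in> V \<and> v \<in> V)
     \<and> (\<forall>u v. E u v \<longrightarrow> E v u) \<and> (\<forall>v. \<not> E v v)"

text \<open>Induced subgraph G[S] is given by the vertex set S with E restricted to S.
  G[S] is isomorphic to the graph (W, F).\<close>
definition induced_iso :: "'a set \<Rightarrow> ('a \<Rightarrow> 'a \<Rightarrow> bool) \<Rightarrow> 'b set \<Rightarrow> ('b \<Rightarrow> 'b \<Rightarrow> bool) \<Rightarrow> bool" where
  "induced_iso S E W F \<longleftrightarrow>
     (\<exists>f. bij_betw f S W \<and> (\<forall>u\<in>S. \<forall>v\<in>S. E u v \<longleftrightarrow> F (f u) (f v)))"

definition closed_nbhd :: "'a set \<Rightarrow> ('a \<Rightarrow> 'a \<Rightarrow> bool) \<Rightarrow> 'a \<Rightarrow> 'a set" where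
  "closed_nbhd V E v = insert v {u \<in> V. E v u}"

definition unit_interval_graph :: "'a set \<Rightarrow> ('a \<Rightarrow> 'a \<Rightarrow> bool) \<Rightarrow> bool" where
  "unit_interval_graph S E \<longleftrightarrow>
     (\<exists>f :: 'a \<Rightarrow> real. \<forall>u\<in>S. \<forall>v\<in>S. u \<noteq> v \<longrightarrow>
        (E u v \<longleftrightarrow> {f u .. f u + 1} \<inter> {f v .. f v + 1} \<noteq> {}))"

definition cycle_adj :: "nat \<Rightarrow> nat \<Rightarrow> nat \<Rightarrow> bool" where
  "cycle_adj n i j \<longleftrightarrow> i < n \<and> j < n \<and> i \<noteq> j \<and> (j = (i + 1) mod n \<or> i = (j + 1) mod n)"

definition compl_adj :: "'a set \<Rightarrow> ('a \<Rightarrow> 'a \<Rightarrow> bool) \<Rightarrow> 'a \<Rightarrow> 'a \<Rightarrow> bool" where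
  "compl_adj V E u v \<longleftrightarrow> u \<in> V \<and> v \<in> V \<and> u \<noteq> v \<and> \<not> E u v"

text \<open>C_4 \<union> K_1: vertices 0..4, a 4-cycle on 0..3 and the isolated vertex 4.\<close>
definition C4_K1_adj :: "nat \<Rightarrow> nat \<Rightarrow> bool" where
  "C4_K1_adj i j \<longleftrightarrow> cycle_adj 4 i j"

text \<open>complement of C_6 (triangular prism) on vertices 0..5.\<close>
definition co_C6_adj :: "nat \<Rightarrow> nat \<Rightarrow> bool" where
  "co_C6_adj = compl_adj {0..<6} (cycle_adj 6)"

definition bipartite :: "'a set \<Rightarrow> ('a \<Rightarrow> 'a \<Rightarrow> bool) \<Rightarrow> bool" where
  "bipartite V E \<longleftrightarrow> (\<exists>A B. A \<union> B = V \<and> A \<inter> B = {} \<and>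
     (\<forall>u\<in>A. \<forall>v\<in>A. \<not> E u v) \<and> (\<forall>u\<in>B. \<forall>v\<in>B. \<not> E u v))"

definition co_bipartite :: "'a set \<Rightarrow> ('a \<Rightarrow> 'a \<Rightarrow> bool) \<Rightarrow> bool" where
  "co_bipartite V E \<longleftrightarrow> bipartite V (compl_adj V E)"

end

theory Submission
  imports Defs
begin


lemma ivl_iff: "{a..a+1} \<inter> {b..b+1} \<noteq> {} \<longleftrightarrow> \<bar>a - b\<bar> \<le> (1::real)"
proof
  assume "{a..a+1} \<inter> {b..b+1} \<noteq> {}"
  then obtain z where "z \<in> {a..a+1}" "z \<in> {b..b+1}" by blast
  then show "\<bar>a - b\<bar> \<le> 1" by auto
next
  assume h: "\<bar>a - b\<bar> \<le> 1"
  have "max a b \<in> {a..a+1} \<inter> {b..b+1}" using h by (auto simp: abs_le_iff max_def)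
  then show "{a..a+1} \<inter> {b..b+1} \<noteq> {}" by blast
qed

lemma three_pts: fixes c p q r :: real
  assumes "\<bar>c-p\<bar>\<le>1" "\<bar>c-q\<bar>\<le>1" "\<bar>c-r\<bar>\<le>1" "\<not>\<bar>p-q\<bar>\<le>1" "\<not>\<bar>q-r\<bar>\<le>1" "\<not>\<bar>p-r\<bar>\<le>1"
  shows False
proof -
  consider "p \<le> q" "q \<le> r" | "p \<le> r" "r \<le> q" | "q \<le> p" "p \<le> r" | "q \<le> r" "r \<le> p" | "r \<le> p" "p \<le> q" | "r \<le> q" "q \<le> p" by linarith
  then show False using assms by cases (simp_all add: abs_if split: if_splits)
qed
lemma c4_pts: fixes a b c d :: real
  assumes "\<bar>a-b\<bar>\<le>1" "\<bar>b-c\<bar>\<le>1" "\<bar>c-d\<bar>\<le>1" "\<bar>d-a\<bar>\<le>1" "\<not>\<bar>a-c\<bar>\<le>1" "\<not>\<bar>b-d\<bar>\<le>1"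
  shows False
proof (cases "a \<le> c")
  case True
  then have "c - a > 1" using assms(5) by linarith
  moreover have "b \<ge> c - 1" "b \<le> a + 1" "d \<ge> c - 1" "d \<le> a + 1" using assms(1-4) by linarith+
  ultimately show False using assms(6) by linarith
next
  case False
  then have "a - c > 1" using assms(5) by linarith
  moreover have "b \<ge> a - 1" "b \<le> c + 1" "d \<ge> a - 1" "d \<le> c + 1" using assms(1-4) by linarith+
  ultimately show False using assms(6) by linarith
qed

lemma uig_ex:
  assumes "graph V E" "\<forall>v\<in>V. unit_interval_graph (closed_nbhd V E v) E" "c \<in> V"
  shows "\<exists>f :: _ \<Rightarrow> real. \<forall>u\<in>closed_nbhd V E c. \<forall>v\<in>closed_nbhd V E c. u \<noteq> v \<longrightarrow>
       (E u v \<longleftrightarrow> \<bar>f u - f v\<bar> \<le> 1)"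
  using assms(2,3) unfolding unit_interval_graph_def ivl_iff by blast

lemma claw:
  assumes G: "graph V E" and U: "\<forall>v\<in>V. unit_interval_graph (closed_nbhd V E v) E"
    and "E c p" "E c q" "E c r" "p \<noteq> q" "q \<noteq> r" "p \<noteq> r"
    and "\<not> E p q" "\<not> E q r" "\<not> E p r"
  shows False
proof -
  have cV: "c \<in> V" using G assms(3) unfolding graph_def by blast
  obtain f :: "_ \<Rightarrow> real" where f0: "\<forall>u\<in>closed_nbhd V E c. \<forall>v\<in>closed_nbhd V E c. u \<noteq> v \<longrightarrow>
       (E u v \<longleftrightarrow> \<bar>f u - f v\<bar> \<le> 1)" using uig_ex[OF G U cV] by blast
  note f = f0[rule_format]
  have N: "c \<in> closed_nbhd V E c" "p \<in> closed_nbhd V E c" "q \<in> closed_nbhd V E c" "r \<in> closed_nbhd V E c"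
    using assms G unfolding closed_nbhd_def graph_def by auto
  have ne: "c \<noteq> p" "c \<noteq> q" "c \<noteq> r" using assms G unfolding graph_def by auto
  have "\<bar>f c - f p\<bar> \<le> 1" "\<bar>f c - f q\<bar> \<le> 1" "\<bar>f c - f r\<bar> \<le> 1"
    using f[OF N(1) N(2) ne(1)] f[OF N(1) N(3) ne(2)] f[OF N(1) N(4) ne(3)] assms by auto
  moreover have "\<not> \<bar>f p - f q\<bar> \<le> 1" "\<not> \<bar>f q - f r\<bar> \<le> 1" "\<not> \<bar>f p - f r\<bar> \<le> 1"
    using f[OF N(2) N(3)] f[OF N(3) N(4)] f[OF N(2) N(4)] assms by auto
  ultimately show False by (rule three_pts)
qed

lemma c4u:
  assumes G: "graph V E" and U: "\<forall>v\<in>V. unit_interval_graph (closed_nbhd V E v) E"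
    and "E w a" "E w b" "E w c" "E w d" "E a b" "E b c" "E c d" "E d a"
    and "\<not> E a c" "\<not> E b d" "a \<noteq> c" "b \<noteq> d"
  shows False
proof -
  have cV: "w \<in> V" using G assms(3) unfolding graph_def by blast
  obtain f :: "_ \<Rightarrow> real" where f0: "\<forall>u\<in>closed_nbhd V E w. \<forall>v\<in>closed_nbhd V E w. u \<noteq> v \<longrightarrow>
       (E u v \<longleftrightarrow> \<bar>f u - f v\<bar> \<le> 1)" using uig_ex[OF G U cV] by blast
  note f = f0[rule_format]
  have N: "a \<in> closed_nbhd V E w" "b \<in> closed_nbhd V E w" "c \<in> closed_nbhd V E w" "d \<in> closed_nbhd V E w"
    using assms G unfolding closed_nbhd_def graph_def by auto
  have ne: "a \<noteq> b" "b \<noteq> c" "c \<noteq> d" "d \<noteq> a" using assms G unfolding graph_def by auto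
  have "\<bar>f a - f b\<bar> \<le> 1" "\<bar>f b - f c\<bar> \<le> 1" "\<bar>f c - f d\<bar> \<le> 1" "\<bar>f d - f a\<bar> \<le> 1"
    using f[OF N(1) N(2) ne(1)] f[OF N(2) N(3) ne(2)] f[OF N(3) N(4) ne(3)] f[OF N(4) N(1) ne(4)] assms by auto
  moreover have "\<not> \<bar>f a - f c\<bar> \<le> 1" "\<not> \<bar>f b - f d\<bar> \<le> 1"
    using f[OF N(1) N(3)] f[OF N(2) N(4)] assms by auto
  ultimately show False by (rule c4_pts)
qed



lemma iso_from_inv:
  assumes "bij_betw g W S" "\<forall>i\<in>W. \<forall>j\<in>W. E (g i) (g j) \<longleftrightarrow> F i j"
  shows "induced_iso S E W F"
  unfolding induced_iso_def
proof (intro exI conjI ballI)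
  show "bij_betw (inv_into W g) S W" using assms(1) by (rule bij_betw_inv_into)
  fix u v assume "u \<in> S" "v \<in> S"
  then show "E u v \<longleftrightarrow> F (inv_into W g u) (inv_into W g v)"
  proof -
    have i: "inv_into W g u \<in> W" "inv_into W g v \<in> W"
      using \<open>u \<in> S\<close> \<open>v \<in> S\<close> assms(1) by (metis bij_betw_apply bij_betw_inv_into)+
    have "g (inv_into W g u) = u" "g (inv_into W g v) = v"
      using \<open>u \<in> S\<close> \<open>v \<in> S\<close> assms(1) by (metis bij_betw_imp_surj_on f_inv_into_f)+
    then show ?thesis using assms(2) i by metis
  qed
qed

lemma c4k1:
  assumes N: "\<not> (\<exists>S\<subseteq>V. induced_iso S E {0..<5} C4_K1_adj)"
    and V: "a \<in> V" "b \<in> V" "c \<in> V" "d \<in> V" "w \<in> V"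
    and D: "distinct [a,b,c,d,w]"
    and S: "\<And>u v. E u v \<Longrightarrow> E v u" "\<And>u. \<not> E u u"
    and "E a b" "E b c" "E c d" "E d a" "\<not> E a c" "\<not> E b d"
    and "\<not> E w a" "\<not> E w b" "\<not> E w c" "\<not> E w d"
  shows False
proof -
  define g where "g = (\<lambda>i::nat. if i = 0 then a else if i = 1 then b else if i = 2 then c else if i = 3 then d else w)"
  have e: "{0..<5::nat} = {0,1,2,3,4}" by auto
  have im: "g ` {0..<5} = {a,b,c,d,w}" unfolding e by (auto simp: g_def)
  have "inj_on g {0..<5}" using D unfolding inj_on_def g_def by auto
  then have bij: "bij_betw g {0..<5} {a,b,c,d,w}" using im by (simp add: bij_betw_def)
  have "\<forall>i\<in>{0..<5}. \<forall>j\<in>{0..<5}. E (g i) (g j) \<longleftrightarrow> C4_K1_adj i j"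
  proof -
    have ef: "E a b" "E b a" "E b c" "E c b" "E c d" "E d c" "E d a" "E a d"
      "\<not> E a c" "\<not> E c a" "\<not> E b d" "\<not> E d b"
      "\<not> E w a" "\<not> E w b" "\<not> E w c" "\<not> E w d" "\<not> E a w" "\<not> E b w" "\<not> E c w" "\<not> E d w"
      "\<not> E a a" "\<not> E b b" "\<not> E c c" "\<not> E d d" "\<not> E w w"
      using assms by blast+
    show ?thesis unfolding e by (simp add: g_def C4_K1_adj_def cycle_adj_def ef)
  qed
  with bij have "induced_iso {a,b,c,d,w} E {0..<5} C4_K1_adj" by (rule iso_from_inv)
  moreover have "{a,b,c,d,w} \<subseteq> V" using V by auto
  ultimately show False using N by blast
qed


definition comp3 :: "('a \<Rightarrow> 'a \<Rightarrow> bool) \<Rightarrow> 'a \<Rightarrow> 'a \<Rightarrow> 'a \<Rightarrow> 'a \<Rightarrow> bool" where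
  "comp3 E p q r u \<longleftrightarrow> (u = p \<or> E u p) \<and> (u = q \<or> E u q) \<and> (u = r \<or> E u r)"

locale prismctx =
  fixes V :: "'a set" and E :: "'a \<Rightarrow> 'a \<Rightarrow> bool" and a1 a2 a3 b1 b2 b3 :: 'a
  assumes G: "graph V E"
    and U: "\<forall>v\<in>V. unit_interval_graph (closed_nbhd V E v) E"
    and N: "\<not> (\<exists>S\<subseteq>V. induced_iso S E {0..<5} C4_K1_adj)"
    and inV: "a1 \<in> V" "a2 \<in> V" "a3 \<in> V" "b1 \<in> V" "b2 \<in> V" "b3 \<in> V"
    and D: "distinct [a1,a2,a3,b1,b2,b3]"
    and ed: "E a1 a2" "E a1 a3" "E a2 a3" "E b1 b2" "E b1 b3" "E b2 b3" "E a1 b1" "E a2 b2" "E a3 b3"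
    and ned: "\<not>E a1 b2" "\<not>E a1 b3" "\<not>E a2 b1" "\<not>E a2 b3" "\<not>E a3 b1" "\<not>E a3 b2"
begin

lemma sym: "E u v \<Longrightarrow> E v u" using G unfolding graph_def by blast
lemma symiff: "E u v \<longleftrightarrow> E v u" using sym by blast
lemma irr: "\<not> E u u" using G unfolding graph_def by blast
lemma EV: "E u v \<Longrightarrow> u \<in> V" using G unfolding graph_def by blast

lemmas clawG = claw[OF G U]
lemmas c4uG = c4u[OF G U]
lemmas c4k1G = c4k1[OF N _ _ _ _ _ _ sym irr]

lemma edall: "E a1 a2" "E a1 a3" "E a2 a3" "E b1 b2" "E b1 b3" "E b2 b3" "E a1 b1" "E a2 b2" "E a3 b3"
  "E a2 a1" "E a3 a1" "E a3 a2" "E b2 b1" "E b3 b1" "E b3 b2" "E b1 a1" "E b2 a2" "E b3 a3"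
  "\<not>E a1 b2" "\<not>E a1 b3" "\<not>E a2 b1" "\<not>E a2 b3" "\<not>E a3 b1" "\<not>E a3 b2"
  "\<not>E b2 a1" "\<not>E b3 a1" "\<not>E b1 a2" "\<not>E b3 a2" "\<not>E b1 a3" "\<not>E b2 a3"
  using ed ned symiff by auto

lemma dd: "a1 \<noteq> a2" "a1 \<noteq> a3" "a2 \<noteq> a3" "b1 \<noteq> b2" "b1 \<noteq> b3" "b2 \<noteq> b3"
  "a1 \<noteq> b1" "a1 \<noteq> b2" "a1 \<noteq> b3" "a2 \<noteq> b1" "a2 \<noteq> b2" "a2 \<noteq> b3" "a3 \<noteq> b1" "a3 \<noteq> b2" "a3 \<noteq> b3"
  using D by auto

lemma L1:
  assumes x: "x \<in> V" "x \<notin> {a1,a2,a3,b1,b2,b3}"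
  shows "(E x a1 \<and> E x a2 \<and> E x a3) \<or> (E x b1 \<and> E x b2 \<and> E x b3)"
proof -
  have xs: "E a1 x = E x a1" "E a2 x = E x a2" "E a3 x = E x a3" "E b1 x = E x b1" "E b2 x = E x b2" "E b3 x = E x b3"
    using symiff by blast+
  have xd: "x \<noteq> a1" "x \<noteq> a2" "x \<noteq> a3" "x \<noteq> b1" "x \<noteq> b2" "x \<noteq> b3"
    "a1 \<noteq> x" "a2 \<noteq> x" "a3 \<noteq> x" "b1 \<noteq> x" "b2 \<noteq> x" "b3 \<noteq> x" using x by auto
  note F = edall dd xd xs inV x(1)
  have k1: "E x a1 \<or> E x a2 \<or> E x b2 \<or> E x b1"
    using c4k1G[of a1 a2 b2 b1 x] F by auto
  have k2: "E x a1 \<or> E x a3 \<or> E x b3 \<or> E x b1"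
    using c4k1G[of a1 a3 b3 b1 x] F by auto
  have k3: "E x a2 \<or> E x a3 \<or> E x b3 \<or> E x b2"
    using c4k1G[of a2 a3 b3 b2 x] F by auto
  have u1: "\<not> (E x a1 \<and> E x a2 \<and> E x b2 \<and> E x b1)"
    using c4uG[of x a1 a2 b2 b1] F by auto
  have u2: "\<not> (E x a1 \<and> E x a3 \<and> E x b3 \<and> E x b1)"
    using c4uG[of x a1 a3 b3 b1] F by auto
  have u3: "\<not> (E x a2 \<and> E x a3 \<and> E x b3 \<and> E x b2)"
    using c4uG[of x a2 a3 b3 b2] F by auto
  have c1: "E x a1 \<longrightarrow> E x b1 \<or> E x a2" using clawG[of a1 b1 a2 x] F by auto
  have c2: "E x a1 \<longrightarrow> E x b1 \<or> E x a3" using clawG[of a1 b1 a3 x] F by auto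
  have c3: "E x a2 \<longrightarrow> E x b2 \<or> E x a1" using clawG[of a2 b2 a1 x] F by auto
  have c4: "E x a2 \<longrightarrow> E x b2 \<or> E x a3" using clawG[of a2 b2 a3 x] F by auto
  have c5: "E x a3 \<longrightarrow> E x b3 \<or> E x a1" using clawG[of a3 b3 a1 x] F by auto
  have c6: "E x a3 \<longrightarrow> E x b3 \<or> E x a2" using clawG[of a3 b3 a2 x] F by auto
  have d1: "E x b1 \<longrightarrow> E x a1 \<or> E x b2" using clawG[of b1 a1 b2 x] F by auto
  have d2: "E x b1 \<longrightarrow> E x a1 \<or> E x b3" using clawG[of b1 a1 b3 x] F by auto
  have d3: "E x b2 \<longrightarrow> E x a2 \<or> E x b1" using clawG[of b2 a2 b1 x] F by auto
  have d4: "E x b2 \<longrightarrow> E x a2 \<or> E x b3" using clawG[of b2 a2 b3 x] F by auto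
  have d5: "E x b3 \<longrightarrow> E x a3 \<or> E x b1" using clawG[of b3 a3 b1 x] F by auto
  have d6: "E x b3 \<longrightarrow> E x a3 \<or> E x b2" using clawG[of b3 a3 b2 x] F by auto
  show ?thesis using k1 k2 k3 u1 u2 u3 c1 c2 c3 c4 c5 c6 d1 d2 d3 d4 d5 d6 by sat
qed

lemma L2:
  assumes x: "x \<in> V" "x \<notin> {a1,a2,a3,b1,b2,b3}" and y: "y \<in> V" "y \<notin> {a1,a2,a3,b1,b2,b3}"
    and "x \<noteq> y" and hx: "E x a1" "E x a2" "E x a3" and hy: "E y a1" "E y a2" "E y a3"
  shows "E x y"
proof (rule ccontr)
  assume nxy: "\<not> E x y"
  have xs: "E a1 x = E x a1" "E a2 x = E x a2" "E a3 x = E x a3" "E b1 x = E x b1" "E b2 x = E x b2" "E b3 x = E x b3"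
   "E a1 y = E y a1" "E a2 y = E y a2" "E a3 y = E y a3" "E b1 y = E y b1" "E b2 y = E y b2" "E b3 y = E y b3" "E y x = E x y"
    using symiff by blast+
  have xd: "x \<noteq> a1" "x \<noteq> a2" "x \<noteq> a3" "x \<noteq> b1" "x \<noteq> b2" "x \<noteq> b3"
    "a1 \<noteq> x" "a2 \<noteq> x" "a3 \<noteq> x" "b1 \<noteq> x" "b2 \<noteq> x" "b3 \<noteq> x" using x by auto
  have yd: "y \<noteq> a1" "y \<noteq> a2" "y \<noteq> a3" "y \<noteq> b1" "y \<noteq> b2" "y \<noteq> b3"
    "a1 \<noteq> y" "a2 \<noteq> y" "a3 \<noteq> y" "b1 \<noteq> y" "b2 \<noteq> y" "b3 \<noteq> y" using y by auto
  note F = edall dd xd yd xs inV x(1) y(1) \<open>x \<noteq> y\<close> nxy hx hy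
  have u1: "\<not> (E x b1 \<and> E x b2)" using c4uG[of x a1 a2 b2 b1] F by auto
  have u2: "\<not> (E x b1 \<and> E x b3)" using c4uG[of x a1 a3 b3 b1] F by auto
  have u3: "\<not> (E x b2 \<and> E x b3)" using c4uG[of x a2 a3 b3 b2] F by auto
  have v1: "\<not> (E y b1 \<and> E y b2)" using c4uG[of y a1 a2 b2 b1] F by auto
  have v2: "\<not> (E y b1 \<and> E y b3)" using c4uG[of y a1 a3 b3 b1] F by auto
  have v3: "\<not> (E y b2 \<and> E y b3)" using c4uG[of y a2 a3 b3 b2] F by auto
  have w1: "E x b1 \<or> E y b1" using clawG[of a1 b1 x y] F by auto
  have w2: "E x b2 \<or> E y b2" using clawG[of a2 b2 x y] F by auto
  have w3: "E x b3 \<or> E y b3" using clawG[of a3 b3 x y] F by auto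
  show False using u1 u2 u3 v1 v2 v3 w1 w2 w3 by sat
qed


lemma side: "u \<in> V \<Longrightarrow> comp3 E a1 a2 a3 u \<or> comp3 E b1 b2 b3 u"
  using L1[of u] edall unfolding comp3_def by auto

lemma clique1:
  assumes "u \<in> V" "v \<in> V" "u \<noteq> v" "comp3 E a1 a2 a3 u" "comp3 E a1 a2 a3 v"
  shows "E u v"
proof -
  have nb: "comp3 E a1 a2 a3 w \<Longrightarrow> w \<notin> {b1,b2,b3}" for w
    using edall dd unfolding comp3_def by auto
  have cu: "u \<notin> {b1,b2,b3}" "v \<notin> {b1,b2,b3}" using nb assms by auto
  show ?thesis
  proof (cases "u \<in> {a1,a2,a3}")
    case True
    then show ?thesis
    proof (cases "v \<in> {a1,a2,a3}")
      case True
      then show ?thesis using \<open>u \<in> {a1,a2,a3}\<close> edall assms(3) by auto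
    next
      case False
      then show ?thesis using \<open>u \<in> {a1,a2,a3}\<close> assms(5) symiff unfolding comp3_def by auto
    qed
  next
    case False
    show ?thesis
    proof (cases "v \<in> {a1,a2,a3}")
      case True
      then show ?thesis using False assms(4) unfolding comp3_def by auto
    next
      case F2: False
      show ?thesis
        apply (rule L2[of u v])
        using assms False F2 cu unfolding comp3_def by auto
    qed
  qed
qed

end

lemma prism_get:
  assumes "induced_iso S E {0..<6::nat} F"
  obtains g where "bij_betw g {0..<6} S" "\<And>i j. i < 6 \<Longrightarrow> j < 6 \<Longrightarrow> E (g i) (g j) \<longleftrightarrow> F i j"
proof -
  obtain f where f: "bij_betw f S {0..<6}" "\<forall>u\<in>S. \<forall>v\<in>S. E u v \<longleftrightarrow> F (f u) (f v)"
    using assms unfolding induced_iso_def by blast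
  let ?g = "inv_into S f"
  have b: "bij_betw ?g {0..<6} S" using f(1) by (rule bij_betw_inv_into)
  have "E (?g i) (?g j) \<longleftrightarrow> F i j" if "i < 6" "j < 6" for i j
  proof -
    have "?g i \<in> S" "?g j \<in> S" using b that by (auto intro: bij_betw_apply)
    moreover have "f (?g i) = i" "f (?g j) = j" using f(1) that
      by (metis atLeastLessThan_iff bij_betw_imp_surj_on f_inv_into_f zero_le)+
    ultimately show ?thesis using f(2) by metis
  qed
  then show ?thesis using b that by blast
qed



theorem mainTheorem16:
  fixes V :: "'a set" and E :: "'a \<Rightarrow> 'a \<Rightarrow> bool" and X :: "'a set"
  assumes G: "graph V E"
    and loc_uig: "\<forall>v\<in>V. unit_interval_graph (closed_nbhd V E v) E"
    and no_C4K1: "\<not> (\<exists>S\<subseteq>V. induced_iso S E {0..<5} C4_K1_adj)"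
    and X_def: "X = {w1 \<in> V. \<exists>w2\<in>V. \<exists>w3\<in>V. \<exists>w4\<in>V. \<exists>w5\<in>V. \<exists>w6\<in>V.
                   induced_iso {w1, w2, w3, w4, w5, w6} E {0..<6} co_C6_adj}"
  shows "co_bipartite X E"
proof (cases "X = {}")
  case True
  then show ?thesis unfolding co_bipartite_def bipartite_def by auto
next
  case False
  then obtain w1 where "w1 \<in> X" by blast
  then obtain w2 w3 w4 w5 w6 where ws: "w1 \<in> V" "w2 \<in> V" "w3 \<in> V" "w4 \<in> V" "w5 \<in> V" "w6 \<in> V"
    and iso: "induced_iso {w1, w2, w3, w4, w5, w6} E {0..<6} co_C6_adj"
    using X_def by blast
  obtain g where gb: "bij_betw g {0..<6} {w1, w2, w3, w4, w5, w6}"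
    and gE: "\<And>i j. i < 6 \<Longrightarrow> j < 6 \<Longrightarrow> E (g i) (g j) \<longleftrightarrow> co_C6_adj i j"
    using prism_get[OF iso] by blast
  have gV: "g i \<in> V" if "i < 6" for i
    using bij_betw_apply[OF gb, of i] that ws by auto
  have ginj: "g i \<noteq> g j" if "i < 6" "j < 6" "i \<noteq> j" for i j
    using gb that unfolding bij_betw_def inj_on_def by auto
  have cc: "co_C6_adj i j \<longleftrightarrow> i < 6 \<and> j < 6 \<and> i \<noteq> j \<and> \<not> (j = Suc i mod 6 \<or> i = Suc j mod 6)" for i j
    unfolding co_C6_adj_def compl_adj_def cycle_adj_def by auto
  interpret P: prismctx V E "g 0" "g 2" "g 4" "g 3" "g 5" "g 1"
    apply unfold_locales
    using G loc_uig no_C4K1 gV ginj by (auto simp: gE cc)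
  interpret Q: prismctx V E "g 3" "g 5" "g 1" "g 0" "g 2" "g 4"
    apply unfold_locales
    using G loc_uig no_C4K1 gV ginj by (auto simp: gE cc)
  define A where "A = {v \<in> X. comp3 E (g 0) (g 2) (g 4) v}"
  have XV: "X \<subseteq> V" using X_def by auto
  have c1: "\<forall>u\<in>A. \<forall>v\<in>A. \<not> compl_adj X E u v"
  proof (intro ballI)
    fix u v assume "u \<in> A" "v \<in> A"
    then show "\<not> compl_adj X E u v"
      using P.clique1[of u v] XV A_def unfolding compl_adj_def by auto
  qed
  have c2: "\<forall>u\<in>X - A. \<forall>v\<in>X - A. \<not> compl_adj X E u v"
  proof (intro ballI)
    fix u v assume uv: "u \<in> X - A" "v \<in> X - A"
    then have "comp3 E (g 3) (g 5) (g 1) u" "comp3 E (g 3) (g 5) (g 1) v"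
      using P.side[of u] P.side[of v] XV A_def by auto
    then show "\<not> compl_adj X E u v"
      using Q.clique1[of u v] XV uv unfolding compl_adj_def by auto
  qed
  have "A \<union> (X - A) = X" "A \<inter> (X - A) = {}" using A_def by auto
  then show ?thesis unfolding co_bipartite_def bipartite_def using c1 c2 by blast
qed

end
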